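(* For $(a,b)\in\{-,+\}^2$ let $f_{ab}(\pi)=F(\pi,\mu_a,\sigma_b)$. Then $$\min_{\pi\in\mathbb R}\max_{(\mu,\sigma)\in D}F(\pi,\mu,\sigma)=\min_{\pi\in\mathbb R}\max_{(a,b)\in\{-,+\}^2}f_{ab}(\pi)=\max_{\{(a,b),(c,d)\}}\ \min_{\pi\in\mathbb R}\max\big(f_{ab}(\pi),f_{cd}(\pi)\big),$$ where the last maximum is over all pairs of distinct corners $(a,b)\neq(c,d)$ in $\{-,+\}^2$.
   Context: Let $0<\mu_-<\mu_+$ and $0<\sigma_-<\sigma_+$ be real numbers, $D=[\mu_-,\mu_+]\times[\sigma_-,\sigma_+]$, and $h_0,h_1\in\mathbb R$. For $\pi\in\mathbb R$ and $(\mu,\sigma)\in D$ put $F(\pi,\mu,\sigma)=(h_0-\pi\mu)^2+(h_1-\pi\sigma)^2$. *)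

theory Defs
  imports "HOL-Analysis.Analysis"
begin

definition F :: "real \<Rightarrow> real \<Rightarrow> real \<Rightarrow> real \<Rightarrow> real \<Rightarrow> real" where
  "F h0 h1 \<pi> \<mu> \<sigma> = (h0 - \<pi> * \<mu>)\<^sup>2 + (h1 - \<pi> * \<sigma>)\<^sup>2"

definition is_min_over_reals :: "(real \<Rightarrow> real) \<Rightarrow> real \<Rightarrow> bool" where
  "is_min_over_reals g v \<longleftrightarrow> (\<exists>x. g x = v) \<and> (\<forall>x. v \<le> g x)"

text \<open>Signs in {-,+} are encoded as bool: False = -, True = +.\<close>
definition sel :: "real \<Rightarrow> real \<Rightarrow> bool \<Rightarrow> real" where
  "sel lo hi s = (if s then hi else lo)"

end

theory Submission
  imports Defs
begin


lemma pair_lemma: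
  fixes g :: "'i::finite \<Rightarrow> real \<Rightarrow> real" and A B C :: "'i \<Rightarrow> real"
  assumes gdef: "\<And>i x. g i x = A i * x\<^sup>2 + B i * x + C i" and Apos: "\<And>i. A i > 0"
    and two: "\<exists>i j::'i. i \<noteq> j"
    and le: "\<forall>i. g i x0 \<le> v" and act: "\<exists>i. g i x0 = v" and lb: "\<forall>x. \<exists>i. v \<le> g i x"
  shows "\<exists>i j. i \<noteq> j \<and> (\<forall>x. v \<le> max (g i x) (g j x))"
proof -
  define d where "d i = 2 * A i * x0 + B i" for i
  have tan: "g i x = g i x0 + d i * (x - x0) + A i * (x - x0)\<^sup>2" for i x
    unfolding gdef d_def by (simp add: power2_eq_square algebra_simps)
  have tanle: "g i x0 + d i * (x - x0) \<le> g i x" for i x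
    using tan[of i x] Apos[of i] by (simp add: add_nonneg_nonneg)
  show ?thesis
  proof (cases "\<exists>i. g i x0 = v \<and> d i = 0")
    case True
    then obtain i where i: "g i x0 = v" "d i = 0" by blast
    obtain j where j: "j \<noteq> i" using two by metis
    have "\<forall>x. v \<le> max (g i x) (g j x)"
      using tanle[of i] i by (metis add.right_neutral max.coboundedI1 mult_zero_left)
    then show ?thesis using j by (metis (full_types))
  next
    case nz: False
    show ?thesis
    proof (cases "\<exists>i j. g i x0 = v \<and> g j x0 = v \<and> d i > 0 \<and> d j < 0")
      case True
      then obtain i j where ij: "g i x0 = v" "g j x0 = v" "d i > 0" "d j < 0" by blast
      have "i \<noteq> j" using ij by auto
      moreover have "\<forall>x. v \<le> max (g i x) (g j x)"
      proof
        fix x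
        show "v \<le> max (g i x) (g j x)"
        proof (cases "x \<ge> x0")
          case True
          have "0 \<le> d i * (x - x0)" using True ij by simp
          then show ?thesis using tanle[of i x] ij by linarith
        next
          case False
          have "0 \<le> d j * (x - x0)" using False ij by (simp add: mult_nonpos_nonpos)
          then show ?thesis using tanle[of j x] ij by linarith
        qed
      qed
      ultimately show ?thesis by blast
    next
      case False
      define \<sigma> :: real where "\<sigma> = (if \<exists>i. g i x0 = v \<and> d i > 0 then -1 else 1)"
      have sig: "\<sigma> * \<sigma> = 1" unfolding \<sigma>_def by simp
      have neg: "\<sigma> * d i < 0" if "g i x0 = v" for i
        using False nz that unfolding \<sigma>_def
        by (smt (verit, best) mult_minus_left mult_cancel_right2)
      have exp: "g i (x0 + \<sigma> * s) = g i x0 + \<sigma> * d i * s + A i * s\<^sup>2" for i s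
        using tan[of i "x0 + \<sigma> * s"] sig by (simp add: power2_eq_square algebra_simps)
      have ev: "\<forall>\<^sub>F s in at_right (0::real). \<forall>i. g i (x0 + \<sigma> * s) < v"
      proof (rule eventually_all_finite)
        fix i
        show "\<forall>\<^sub>F s in at_right (0::real). g i (x0 + \<sigma> * s) < v"
        proof (cases "g i x0 = v")
          case True
          have t: "((\<lambda>s. \<sigma> * d i + A i * s) \<longlongrightarrow> \<sigma> * d i + A i * 0) (at_right (0::real))"
            by (intro tendsto_intros)
          have e1: "\<forall>\<^sub>F s in at_right (0::real). \<sigma> * d i + A i * s < 0"
            using order_tendstoD(2)[OF t] neg[OF True] by simp
          have e2: "\<forall>\<^sub>F s in at_right (0::real). s > 0"
            using eventually_at_right_real[of 0 1] by (rule eventually_mono) auto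
          show ?thesis
          proof (rule eventually_mono[OF eventually_conj[OF e1 e2]])
            fix s :: real assume "\<sigma> * d i + A i * s < 0 \<and> 0 < s"
            then have "s * (\<sigma> * d i + A i * s) < 0" by (simp add: mult_pos_neg)
            then show "g i (x0 + \<sigma> * s) < v" using exp[of i s] True
              by (simp add: power2_eq_square algebra_simps)
          qed
        next
          case False
          then have lt: "g i x0 < v" using le by (meson order_le_less)
          have t: "((\<lambda>s. g i x0 + \<sigma> * d i * s + A i * s\<^sup>2) \<longlongrightarrow> g i x0 + \<sigma> * d i * 0 + A i * 0\<^sup>2) (at_right (0::real))"
            by (intro tendsto_intros)
          show ?thesis using order_tendstoD(2)[OF t] lt exp by simp
        qed
      qed
      then obtain s where "\<forall>i. g i (x0 + \<sigma> * s) < v"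
        using eventually_happens trivial_limit_at_right_real by blast
      then show ?thesis using lb by (meson not_le)
    qed
  qed
qed


lemma coercive_min:
  fixes g :: "real \<Rightarrow> real"
  assumes cont: "continuous_on UNIV g" and m: "m > 0" and lb: "\<And>x. (h - x*m)\<^sup>2 \<le> g x"
  shows "\<exists>x0. \<forall>x. g x0 \<le> g x"
proof -
  define K where "K = \<bar>g 0\<bar>"
  have K0: "K \<ge> 0" unfolding K_def by simp
  define R where "R = (\<bar>h\<bar> + sqrt K + 1) / m"
  have R0: "R \<ge> 0" unfolding R_def K_def using m by simp
  obtain x0 where x0: "x0 \<in> {-R..R}" "\<forall>y\<in>{-R..R}. g x0 \<le> g y"
    using continuous_attains_inf[of "{-R..R}" g] cont R0
    by (metis atLeastAtMost_iff compact_Icc continuous_on_subset empty_iff neg_le_0_iff_le order.trans subset_UNIV)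
  have "0 \<in> {-R..R}" using R0 by simp
  then have g0: "g x0 \<le> K" using x0(2) unfolding K_def by (metis abs_ge_self order_trans)
  have "g x0 \<le> g y" for y
  proof (cases "y \<in> {-R..R}")
    case True then show ?thesis using x0 by blast
  next
    case False
    then have "\<bar>y\<bar> > R" by auto
    then have "\<bar>y\<bar> * m > R * m" using m by simp
    also have "R * m = \<bar>h\<bar> + sqrt K + 1" unfolding R_def using m by simp
    finally have "\<bar>y * m\<bar> > \<bar>h\<bar> + sqrt K + 1" using m by (simp add: abs_mult)
    then have a: "\<bar>h - y*m\<bar> > sqrt K" by linarith
    have "sqrt K \<ge> 0" using K0 by simp
    then have "(sqrt K)\<^sup>2 < \<bar>h - y*m\<bar>\<^sup>2" using a by (intro power_strict_mono) auto
    moreover have "(sqrt K)\<^sup>2 = K" using K0 by simp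
    ultimately have "K < (h - y*m)\<^sup>2" by (metis power2_abs)
    then show ?thesis using lb[of y] g0 by linarith
  qed
  then show ?thesis by blast
qed

lemma between_sq:
  fixes h p a b u :: real
  assumes "a \<le> u" "u \<le> b"
  shows "(h - p*u)\<^sup>2 \<le> max ((h - p*a)\<^sup>2) ((h - p*b)\<^sup>2)"
proof -
  have "p*u \<le> max (p*a) (p*b) \<and> min (p*a) (p*b) \<le> p*u"
    using assms by (cases "p \<ge> 0") (auto simp: mult_left_mono mult_left_mono_neg max_def min_def)
  then have "\<bar>h - p*u\<bar> \<le> max \<bar>h - p*a\<bar> \<bar>h - p*b\<bar>" by (auto simp: max_def min_def split: if_splits abs_split)
  then have "\<bar>h - p*u\<bar> \<le> \<bar>h - p*a\<bar> \<or> \<bar>h - p*u\<bar> \<le> \<bar>h - p*b\<bar>" by (simp add: le_max_iff_disj)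
  then have "(h - p*u)\<^sup>2 \<le> (h - p*a)\<^sup>2 \<or> (h - p*u)\<^sup>2 \<le> (h - p*b)\<^sup>2" by (simp add: abs_le_square_iff)
  then show ?thesis by linarith
qed


theorem mainTheorem11:
  fixes mm mp sm sp h0 h1 :: real
  assumes "0 < mm" "mm < mp" "0 < sm" "sm < sp"
  defines "D \<equiv> {mm..mp} \<times> {sm..sp}"
      and "f \<equiv> (\<lambda>(a::bool, b::bool) \<pi>. F h0 h1 \<pi> (sel mm mp a) (sel sm sp b))"
  shows "\<exists>v.
     \<comment> \<open>the inner maximum over D exists for every pi\<close>
     (\<forall>\<pi>. \<exists>z\<in>D. \<forall>z'\<in>D. F h0 h1 \<pi> (fst z') (snd z') \<le> F h0 h1 \<pi> (fst z) (snd z)) \<and>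
     is_min_over_reals (\<lambda>\<pi>. Sup ((\<lambda>z. F h0 h1 \<pi> (fst z) (snd z)) ` D)) v \<and>
     is_min_over_reals (\<lambda>\<pi>. Max ((\<lambda>c. f c \<pi>) ` UNIV)) v \<and>
     (\<exists>p q. p \<noteq> q \<and> is_min_over_reals (\<lambda>\<pi>. max (f p \<pi>) (f q \<pi>)) v) \<and>
     (\<forall>p q. p \<noteq> q \<longrightarrow> (\<exists>w. is_min_over_reals (\<lambda>\<pi>. max (f p \<pi>) (f q \<pi>)) w \<and> w \<le> v))"
  proof -
  define G where "G \<pi> = max ((h0-\<pi> * mm)\<^sup>2) ((h0-\<pi> * mp)\<^sup>2) + max ((h1-\<pi> * sm)\<^sup>2) ((h1-\<pi> * sp)\<^sup>2)" for \<pi>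
  define cs where "cs \<pi> = ((h0-\<pi> * mm)\<^sup>2 \<le> (h0-\<pi> * mp)\<^sup>2, (h1-\<pi> * sm)\<^sup>2 \<le> (h1-\<pi> * sp)\<^sup>2)" for \<pi>
  have fval: "f c \<pi> = F h0 h1 \<pi> (sel mm mp (fst c)) (sel sm sp (snd c))" for c \<pi>
    unfolding f_def by (simp add: case_prod_beta)
  have selD: "(sel mm mp a, sel sm sp b) \<in> D" for a b
    unfolding D_def sel_def using assms(1-4) by auto
  have hG: "F h0 h1 \<pi> (fst z) (snd z) \<le> G \<pi>" if "z \<in> D" for z \<pi>
  proof -
    have "(h0 - \<pi>*fst z)\<^sup>2 \<le> max ((h0-\<pi> * mm)\<^sup>2) ((h0-\<pi> * mp)\<^sup>2)"
      using that unfolding D_def by (intro between_sq) auto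
    moreover have "(h1 - \<pi> * snd z)\<^sup>2 \<le> max ((h1-\<pi> * sm)\<^sup>2) ((h1-\<pi> * sp)\<^sup>2)"
      using that unfolding D_def by (intro between_sq) auto
    ultimately show ?thesis unfolding F_def G_def by linarith
  qed
  have hc: "f (cs \<pi>) \<pi> = G \<pi>" for \<pi>
    unfolding fval cs_def G_def F_def sel_def max_def by simp
  have fle: "f c \<pi> \<le> G \<pi>" for c \<pi>
    using hG[OF selD[of "fst c" "snd c"], of \<pi>] unfolding fval by simp
  have conj1: "\<forall>\<pi>. \<exists>z\<in>D. \<forall>z'\<in>D. F h0 h1 \<pi> (fst z') (snd z') \<le> F h0 h1 \<pi> (fst z) (snd z)"
  proof
    fix \<pi>
    let ?z = "(sel mm mp (fst (cs \<pi>)), sel sm sp (snd (cs \<pi>)))"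
    have "F h0 h1 \<pi> (fst ?z) (snd ?z) = G \<pi>" using hc[of \<pi>] unfolding fval by simp
    then show "\<exists>z\<in>D. \<forall>z'\<in>D. F h0 h1 \<pi> (fst z') (snd z') \<le> F h0 h1 \<pi> (fst z) (snd z)"
      using selD hG by (intro bexI[of _ ?z]) auto
  qed
  have supG: "Sup ((\<lambda>z. F h0 h1 \<pi> (fst z) (snd z)) ` D) = G \<pi>" for \<pi>
  proof (rule cSup_eq_maximum)
    let ?z = "(sel mm mp (fst (cs \<pi>)), sel sm sp (snd (cs \<pi>)))"
    have "F h0 h1 \<pi> (fst ?z) (snd ?z) = G \<pi>" using hc[of \<pi>] unfolding fval by simp
    then show "G \<pi> \<in> (\<lambda>z. F h0 h1 \<pi> (fst z) (snd z)) ` D" using selD[of "fst (cs \<pi>)" "snd (cs \<pi>)"] by (metis (no_types, lifting) image_eqI)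
  next
    show "\<And>x. x \<in> (\<lambda>z. F h0 h1 \<pi> (fst z) (snd z)) ` D \<Longrightarrow> x \<le> G \<pi>" using hG by fastforce
  qed
  have maxG: "Max ((\<lambda>c. f c \<pi>) ` UNIV) = G \<pi>" for \<pi>
  proof (rule Max_eqI)
    show "G \<pi> \<in> (\<lambda>c. f c \<pi>) ` UNIV" by (metis hc rangeI)
  qed (use fle in auto)
  have contG: "continuous_on UNIV G" unfolding G_def by (intro continuous_intros)
  have Glb: "(h0 - x * mm)\<^sup>2 \<le> G x" for x :: real
    using max.cobounded1[of "(h0 - x*mm)^2" "(h0 - x*mp)^2"] zero_le_power2[of "h1 - x * sm"]
      max.cobounded1[of "(h1-x * sm)^2" "(h1-x * sp)^2"] unfolding G_def by linarith
  obtain x0 where x0: "\<forall>x. G x0 \<le> G x"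
    using coercive_min[OF contG assms(1) Glb] by blast
  define v where "v = G x0"
  have m1: "is_min_over_reals (\<lambda>\<pi>. Sup ((\<lambda>z. F h0 h1 \<pi> (fst z) (snd z)) ` D)) v"
    unfolding is_min_over_reals_def supG v_def using x0 by auto
  have m2: "is_min_over_reals (\<lambda>\<pi>. Max ((\<lambda>c. f c \<pi>) ` UNIV)) v"
    unfolding is_min_over_reals_def maxG v_def using x0 by auto
  define A where "A c = (sel mm mp (fst c))\<^sup>2 + (sel sm sp (snd c))\<^sup>2" for c
  define B where "B c = - 2 * (h0 * sel mm mp (fst c) + h1 * sel sm sp (snd c))" for c
  define C where "C (c::bool\<times>bool) = h0\<^sup>2 + h1\<^sup>2" for c
  have selpos: "sel mm mp a > 0" "sel sm sp b > 0" for a b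
    unfolding sel_def using assms(1-4) by auto
  have gform: "f c x = A c * x\<^sup>2 + B c * x + C c" for c x
    unfolding fval F_def A_def B_def C_def by (simp add: power2_eq_square algebra_simps)
  have Apos: "A c > 0" for c unfolding A_def using selpos(1)[of "fst c"] selpos(2)[of "snd c"] by (simp add: add_pos_pos)
  have two: "\<exists>i j::bool\<times>bool. i \<noteq> j" by (intro exI[of _ "(True,True)"] exI[of _ "(False,False)"]) simp
  obtain p q where pq: "p \<noteq> q" "\<forall>x. v \<le> max (f p x) (f q x)"
    using pair_lemma[of f A B C, OF gform Apos two, of x0 v] fle hc x0 unfolding v_def by metis
  have m3: "is_min_over_reals (\<lambda>\<pi>. max (f p \<pi>) (f q \<pi>)) v"
    unfolding is_min_over_reals_def
  proof (intro conjI exI[of _ x0])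
    show "max (f p x0) (f q x0) = v" using pq(2) fle[of p x0] fle[of q x0] unfolding v_def
      by (meson antisym max.boundedI)
  qed (use pq in auto)
  have m4: "\<exists>w. is_min_over_reals (\<lambda>\<pi>. max (f p \<pi>) (f q \<pi>)) w \<and> w \<le> v" for p q
  proof -
    have cont: "continuous_on UNIV (\<lambda>\<pi>. max (f p \<pi>) (f q \<pi>))"
      unfolding gform by (intro continuous_intros)
    have lb: "(h0 - x * sel mm mp (fst p))\<^sup>2 \<le> max (f p x) (f q x)" for x
      unfolding fval F_def by (simp add: max.coboundedI1)
    obtain y where y: "\<forall>x. max (f p y) (f q y) \<le> max (f p x) (f q x)"
      using coercive_min[OF cont selpos(1) lb] by blast
    have "max (f p y) (f q y) \<le> v"
      using y[rule_format, of x0] fle[of p x0] fle[of q x0] unfolding v_def by linarith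
    then show ?thesis using y unfolding is_min_over_reals_def by blast
  qed
  show ?thesis using conj1 m1 m2 m3 m4 pq(1) by blast
qed

end
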